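(* Let $G$ be an internally 3-connected graph containing two nontrivial fans $F_1,F_2$ (fans of $G$). If $F_1$ and $F_2$ have a common interior vertex, then they have the same center.
   Context: Graphs are finite and simple. A graph is internally 3-connected if it is obtained from a 3-connected graph by subdividing each edge at most once. Type-I graphs: let $H$ have a specified Hamiltonian cycle $C$; edges not in $C$ are chords; non-incident chords $ab,cd$ cross if $a,c,b,d$ occur in this cyclic order on $C$. $H$ is type-I if every chord crosses at most one other chord and, whenever chords $ab,cd$ cross, either both $ac,bd\in E(C)$ or both $ad,bc\in E(C)$. A fan: a type-I graph $H$ with reference cycle $C$ and two edges $ab,ad$ of $C$ sharing the end $a$ such that every chord joins $a$ to the path $C\setminus a$; its corners are $a,b,d$, its center is $a$, its length is its number of chords; it is nontrivial if its length is at least $2$. A fan of $G$: $J\subseteq G$ is a fan of $G$ if $G$ is obtained from a graph $H'$ by adding the fan $J$, i.e. identifying the corners of $J$ with distinct vertices of $H'$, where $J,H'$ are regarded as subgraphs of $G$ with $V(J\cap H')$ equal to the set $Z$ of corners of $J$ (so every edge of $G$ incident with a vertex of $J\setminus Z$ lies in $J$). Vertices of $J\setminus Z$ are interior vertices of $J$. *)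

theory Defs
  imports Main
begin

definition simple_graph :: "'a set \<Rightarrow> 'a set set \<Rightarrow> bool" where
  "simple_graph V E \<longleftrightarrow> finite V \<and>
     (\<forall>e\<in>E. \<exists>u v. e = {u, v} \<and> u \<noteq> v \<and> u \<in> V \<and> v \<in> V)"

definition connected_graph :: "'a set \<Rightarrow> 'a set set \<Rightarrow> bool" where
  "connected_graph V E \<longleftrightarrow>
     (\<forall>u\<in>V. \<forall>v\<in>V. (u, v) \<in> {(x, y). {x, y} \<in> E \<and> x \<in> V \<and> y \<in> V}\<^sup>*)"

definition three_connected :: "'a set \<Rightarrow> 'a set set \<Rightarrow> bool" where
  "three_connected V E \<longleftrightarrow> simple_graph V E \<and> card V \<ge> 4 \<and>
     (\<forall>S. S \<subseteq> V \<and> card S \<le> 2 \<longrightarrow> connected_graph (V - S) {e \<in> E. e \<inter> S = {}})"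

text \<open>Internally 3-connected: obtained from a 3-connected graph (W,F) by subdividing each
  edge at most once; the subdivision vertex x \<in> V - W subdivides the edge \<sigma> x.\<close>
definition internally_3_connected :: "'a set \<Rightarrow> 'a set set \<Rightarrow> bool" where
  "internally_3_connected V E \<longleftrightarrow> simple_graph V E \<and>
     (\<exists>W F \<sigma>. W \<subseteq> V \<and> three_connected W F \<and> (\<forall>x\<in>V - W. \<sigma> x \<in> F) \<and>
        inj_on \<sigma> (V - W) \<and>
        E = (F - \<sigma> ` (V - W)) \<union> {{x, y} | x y. x \<in> V - W \<and> y \<in> \<sigma> x})"

text \<open>A cycle is given as a list of distinct vertices in cyclic order.\<close>
definition cyc_edges :: "'a list \<Rightarrow> 'a set set" where
  "cyc_edges cyc = {{cyc ! i, cyc ! (Suc i mod length cyc)} | i. i < length cyc}"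

definition hamiltonian_cycle :: "'a set \<Rightarrow> 'a set set \<Rightarrow> 'a list \<Rightarrow> bool" where
  "hamiltonian_cycle V E cyc \<longleftrightarrow> distinct cyc \<and> set cyc = V \<and> length cyc \<ge> 3 \<and>
     cyc_edges cyc \<subseteq> E"

definition chords :: "'a set set \<Rightarrow> 'a list \<Rightarrow> 'a set set" where
  "chords E cyc = E - cyc_edges cyc"

definition cyclic4 :: "nat \<Rightarrow> nat \<Rightarrow> nat \<Rightarrow> nat \<Rightarrow> bool" where
  "cyclic4 i j k l \<longleftrightarrow> (i < j \<and> j < k \<and> k < l) \<or> (j < k \<and> k < l \<and> l < i) \<or>
                      (k < l \<and> l < i \<and> i < j) \<or> (l < i \<and> i < j \<and> j < k)"

definition in_cyclic_order :: "'a list \<Rightarrow> 'a \<Rightarrow> 'a \<Rightarrow> 'a \<Rightarrow> 'a \<Rightarrow> bool" where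
  "in_cyclic_order cyc a c b d \<longleftrightarrow>
     (\<exists>i j k l. i < length cyc \<and> j < length cyc \<and> k < length cyc \<and> l < length cyc \<and>
        cyc ! i = a \<and> cyc ! j = c \<and> cyc ! k = b \<and> cyc ! l = d \<and> cyclic4 i j k l)"

definition crosses :: "'a list \<Rightarrow> 'a set \<Rightarrow> 'a set \<Rightarrow> bool" where
  "crosses cyc e f \<longleftrightarrow> e \<inter> f = {} \<and>
     (\<exists>a b c d. e = {a, b} \<and> f = {c, d} \<and> in_cyclic_order cyc a c b d)"

definition type_I :: "'a set \<Rightarrow> 'a set set \<Rightarrow> 'a list \<Rightarrow> bool" where
  "type_I V E cyc \<longleftrightarrow> simple_graph V E \<and> hamiltonian_cycle V E cyc \<and>
     (\<forall>e\<in>chords E cyc. card {f \<in> chords E cyc. crosses cyc e f} \<le> 1) \<and>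
     (\<forall>a b c d. {a, b} \<in> chords E cyc \<and> {c, d} \<in> chords E cyc \<and> {a, b} \<inter> {c, d} = {} \<and>
        in_cyclic_order cyc a c b d \<longrightarrow>
        ({a, c} \<in> cyc_edges cyc \<and> {b, d} \<in> cyc_edges cyc) \<or>
        ({a, d} \<in> cyc_edges cyc \<and> {b, c} \<in> cyc_edges cyc))"

text \<open>A fan (V,E) with reference cycle cyc, center a and corners a, b, d.\<close>
definition is_fan :: "'a set \<Rightarrow> 'a set set \<Rightarrow> 'a list \<Rightarrow> 'a \<Rightarrow> 'a \<Rightarrow> 'a \<Rightarrow> bool" where
  "is_fan V E cyc a b d \<longleftrightarrow> type_I V E cyc \<and> b \<noteq> d \<and>
     {a, b} \<in> cyc_edges cyc \<and> {a, d} \<in> cyc_edges cyc \<and>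
     (\<forall>e\<in>chords E cyc. a \<in> e)"

definition fan_length :: "'a set set \<Rightarrow> 'a list \<Rightarrow> nat" where
  "fan_length E cyc = card (chords E cyc)"

text \<open>(VJ,EJ) is a fan of G = (V,E): G is obtained from a graph H' = (VH,EH) by adding the fan,
  with V(J \<inter> H') equal to the set of corners.\<close>
definition fan_of :: "'a set \<Rightarrow> 'a set set \<Rightarrow> 'a set \<Rightarrow> 'a set set \<Rightarrow> 'a list \<Rightarrow> 'a \<Rightarrow> 'a \<Rightarrow> 'a \<Rightarrow> bool" where
  "fan_of V E VJ EJ cyc a b d \<longleftrightarrow> is_fan VJ EJ cyc a b d \<and>
     (\<exists>VH EH. simple_graph VH EH \<and> VH \<union> VJ = V \<and> EH \<union> EJ = E \<and> VH \<inter> VJ = {a, b, d})"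

end

theory Submission
  imports Defs
begin


definition nb :: "'a set set \<Rightarrow> 'a \<Rightarrow> 'a set" where
  "nb E v = {u. {u, v} \<in> E}"

lemma two_elem:
  assumes "card A = 2" "p \<in> A" "q \<in> A" "p \<noteq> q" shows "A = {p, q}"
proof -
  have fin: "finite A" using assms(1) by (metis card.infinite zero_neq_numeral)
  have "{p,q} \<subseteq> A" using assms by auto
  moreover have "card {p,q} = 2" using assms(4) by auto
  ultimately show ?thesis using card_subset_eq[OF fin] assms(1) by metis
qed

lemma two_elem_ex:
  assumes "card A = 2" "p \<in> A" shows "\<exists>q. q \<noteq> p \<and> A = {p, q}"
proof -
  obtain x y where "x \<noteq> y" "A = {x,y}" using assms(1) by (meson card_2_iff)
  then show ?thesis using assms(2) by auto
qed

lemma cyc_succ: "i < n \<Longrightarrow> Suc i mod n = (if Suc i = n then 0 else Suc i)"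
  by auto

lemma cn_nth:
  assumes dist: "distinct cyc" and len: "3 \<le> length cyc" and i: "i < length cyc"
  shows "nb (cyc_edges cyc) (cyc!i) =
     {cyc!(if Suc i = length cyc then 0 else Suc i), cyc!(if i = 0 then length cyc - 1 else i - 1)}"
proof -
  let ?n = "length cyc"
  show ?thesis
  proof (rule set_eqI, rule iffI)
    fix u assume "u \<in> nb (cyc_edges cyc) (cyc!i)"
    then obtain j where j: "j < ?n" and eq: "{u, cyc!i} = {cyc!j, cyc!(Suc j mod ?n)}"
      unfolding nb_def cyc_edges_def by auto
    have sj: "Suc j mod ?n < ?n" using j by (metis mod_less_divisor not_less0 gr0I)
    from eq have "(u = cyc!j \<and> cyc!i = cyc!(Suc j mod ?n)) \<or> (u = cyc!(Suc j mod ?n) \<and> cyc!i = cyc!j)"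
      by (auto simp: doubleton_eq_iff)
    then show "u \<in> {cyc!(if Suc i = ?n then 0 else Suc i), cyc!(if i = 0 then ?n - 1 else i - 1)}"
    proof
      assume h: "u = cyc!j \<and> cyc!i = cyc!(Suc j mod ?n)"
      then have "i = Suc j mod ?n" using nth_eq_iff_index_eq[OF dist i sj] by simp
      then have "j = (if i = 0 then ?n - 1 else i - 1)" using j cyc_succ[OF j] by (auto split: if_splits)
      then show ?thesis using h by simp
    next
      assume h: "u = cyc!(Suc j mod ?n) \<and> cyc!i = cyc!j"
      then have "i = j" using nth_eq_iff_index_eq[OF dist i j] by simp
      then show ?thesis using h cyc_succ[OF j] by simp
    qed
  next
    fix u assume u: "u \<in> {cyc!(if Suc i = ?n then 0 else Suc i), cyc!(if i = 0 then ?n - 1 else i - 1)}"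
    have e1: "{cyc!i, cyc!(Suc i mod ?n)} \<in> cyc_edges cyc" using i unfolding cyc_edges_def by auto
    define j where "j = (if i = 0 then ?n - 1 else i - 1)"
    have j: "j < ?n" using i len unfolding j_def by auto
    have sj: "Suc j mod ?n = i" using cyc_succ[OF j] i len unfolding j_def by auto
    have e2: "{cyc!j, cyc!(Suc j mod ?n)} \<in> cyc_edges cyc" using j unfolding cyc_edges_def by auto
    show "u \<in> nb (cyc_edges cyc) (cyc!i)"
      using u e1 e2 sj cyc_succ[OF i] unfolding nb_def j_def by (auto simp: insert_commute)
  qed
qed

lemma cn_card:
  assumes dist: "distinct cyc" and len: "3 \<le> length cyc" and v: "v \<in> set cyc"
  shows "card (nb (cyc_edges cyc) v) = 2"
proof -
  obtain i where i: "i < length cyc" "v = cyc!i" using v by (metis in_set_conv_nth)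
  let ?n = "length cyc"
  have a: "(if Suc i = ?n then 0 else Suc i) < ?n" "(if i = 0 then ?n - 1 else i - 1) < ?n"
    using i len by auto
  have "(if Suc i = ?n then 0 else Suc i) \<noteq> (if i = 0 then ?n - 1 else i - 1)" using i len by auto
  then have "cyc!(if Suc i = ?n then 0 else Suc i) \<noteq> cyc!(if i = 0 then ?n - 1 else i - 1)"
    using nth_eq_iff_index_eq[OF dist a] by simp
  then show ?thesis using cn_nth[OF dist len i(1)] i(2) by simp
qed

lemma cn_closure:
  assumes dist: "distinct cyc" and len: "3 \<le> length cyc"
    and v0: "v0 \<in> S" "v0 \<in> set cyc" and cl: "\<forall>v\<in>S. nb (cyc_edges cyc) v \<subseteq> S"
  shows "set cyc \<subseteq> S"
proof -
  let ?n = "length cyc"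
  obtain i0 where i0: "i0 < ?n" "cyc!i0 = v0" using v0 by (metis in_set_conv_nth)
  have all: "cyc!((i0 + m) mod ?n) \<in> S" for m
  proof (induction m)
    case 0 then show ?case using i0 v0 by simp
  next
    case (Suc m)
    let ?j = "(i0 + m) mod ?n"
    have j: "?j < ?n" using i0 by (metis mod_less_divisor not_less0 gr0I)
    have "{cyc!?j, cyc!(Suc ?j mod ?n)} \<in> cyc_edges cyc" using j unfolding cyc_edges_def by auto
    then have "cyc!(Suc ?j mod ?n) \<in> nb (cyc_edges cyc) (cyc!?j)" unfolding nb_def by (simp add: insert_commute)
    then have "cyc!(Suc ?j mod ?n) \<in> S" using cl Suc by auto
    moreover have "Suc ?j mod ?n = (i0 + Suc m) mod ?n" by (simp add: mod_Suc_eq)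
    ultimately show ?case by simp
  qed
  show ?thesis
  proof
    fix v assume "v \<in> set cyc"
    then obtain k where k: "k < ?n" "v = cyc!k" by (metis in_set_conv_nth)
    have "(i0 + (k + ?n - i0)) mod ?n = k" using k i0 by simp
    then show "v \<in> S" using all[of "k + ?n - i0"] k by simp
  qed
qed



lemma deg3F:
  assumes tc: "three_connected W F" and v: "v \<in> W" shows "3 \<le> card (nb F v)"
proof (rule ccontr)
  assume "\<not> 3 \<le> card (nb F v)"
  then have c2: "card (nb F v) \<le> 2" by simp
  let ?S = "nb F v"
  have sg: "simple_graph W F" and c4: "card W \<ge> 4"
    and con: "\<And>S. S \<subseteq> W \<Longrightarrow> card S \<le> 2 \<Longrightarrow> connected_graph (W - S) {e \<in> F. e \<inter> S = {}}"
    using tc unfolding three_connected_def by auto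
  have finW: "finite W" using sg unfolding simple_graph_def by auto
  have SW: "?S \<subseteq> W" using sg unfolding simple_graph_def nb_def by (auto simp: doubleton_eq_iff)
  have vS: "v \<notin> ?S"
  proof
    assume "v \<in> ?S"
    then have "{v} \<in> F" unfolding nb_def by auto
    then obtain p q where "{v} = {p,q}" "p \<noteq> q" using sg unfolding simple_graph_def by blast
    then have "p \<in> {v}" "q \<in> {v}" by auto
    then show False using \<open>p \<noteq> q\<close> by auto
  qed
  have "\<not> W \<subseteq> insert v ?S"
  proof
    assume "W \<subseteq> insert v ?S"
    moreover have "finite ?S" using finW SW finite_subset by blast
    ultimately have "card W \<le> card (insert v ?S)" by (intro card_mono) auto
    also have "\<dots> \<le> Suc (card ?S)" by (simp add: card_insert_le_m1)
    finally show False using c2 c4 by simp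
  qed
  then obtain u where u: "u \<in> W" "u \<noteq> v" "u \<notin> ?S" by auto
  have "connected_graph (W - ?S) {e \<in> F. e \<inter> ?S = {}}" using con SW c2 by auto
  then have "(v, u) \<in> {(x, y). {x, y} \<in> {e \<in> F. e \<inter> ?S = {}} \<and> x \<in> W - ?S \<and> y \<in> W - ?S}\<^sup>*"
    unfolding connected_graph_def using u v vS by auto
  then show False
  proof (cases rule: converse_rtranclE)
    case base then show False using u by simp
  next
    case (step y)
    then have "{v,y} \<in> F" "y \<notin> ?S" by auto
    then show False unfolding nb_def by (auto simp: insert_commute)
  qed
qed

lemma no_adj_deg2:
  assumes i3: "internally_3_connected V E" and uv: "{u,v} \<in> E"
    and cu: "card (nb E u) \<le> 2" and cv: "card (nb E v) \<le> 2"
  shows False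
proof -
  obtain W F \<sigma> where W: "W \<subseteq> V" and tc: "three_connected W F" and sF: "\<forall>x\<in>V - W. \<sigma> x \<in> F"
    and inj: "inj_on \<sigma> (V - W)"
    and Edef: "E = (F - \<sigma> ` (V - W)) \<union> {{x, y} | x y. x \<in> V - W \<and> y \<in> \<sigma> x}"
    using i3 unfolding internally_3_connected_def by blast
  have sgE: "simple_graph V E" using i3 unfolding internally_3_connected_def by auto
  have sgF: "simple_graph W F" using tc unfolding three_connected_def by auto
  have finNE: "finite (nb E z)" for z
  proof -
    have "nb E z \<subseteq> V" using sgE unfolding nb_def simple_graph_def by (auto simp: doubleton_eq_iff)
    moreover have "finite V" using sgE unfolding simple_graph_def by auto
    ultimately show ?thesis using finite_subset by blast
  qed
  have FW: "e \<subseteq> W" if "e \<in> F" for e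
  proof -
    have "\<exists>u v. e = {u, v} \<and> u \<noteq> v \<and> u \<in> W \<and> v \<in> W" using sgF that unfolding simple_graph_def by simp
    then show ?thesis by auto
  qed
  have degE: "3 \<le> card (nb E z)" if z: "z \<in> W" for z
  proof -
    define g where "g = inv_into (V - W) \<sigma>"
    define f where "f = (\<lambda>u. if {z,u} \<in> \<sigma> ` (V - W) then g {z,u} else u)"
    have NFW: "nb F z \<subseteq> W" unfolding nb_def using FW by blast
    have gp: "g {z,u} \<in> V - W \<and> \<sigma> (g {z,u}) = {z,u}" if "{z,u} \<in> \<sigma> ` (V - W)" for u
      using inv_into_into[OF that] f_inv_into_f[OF that] unfolding g_def by simp
    have "inj_on f (nb F z)"
    proof (rule inj_onI)
      fix u1 u2 assume u1: "u1 \<in> nb F z" and u2: "u2 \<in> nb F z" and eq: "f u1 = f u2"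
      show "u1 = u2"
      proof (cases "{z,u1} \<in> \<sigma> ` (V - W)"; cases "{z,u2} \<in> \<sigma> ` (V - W)")
        assume c1: "{z,u1} \<in> \<sigma> ` (V - W)" and c2: "{z,u2} \<in> \<sigma> ` (V - W)"
        then have "g {z,u1} = g {z,u2}" using eq unfolding f_def by simp
        then have "{z,u1} = {z,u2}" using gp[OF c1] gp[OF c2] by metis
        then show ?thesis by (auto simp: doubleton_eq_iff)
      next
        assume c1: "{z,u1} \<in> \<sigma> ` (V - W)" and c2: "{z,u2} \<notin> \<sigma> ` (V - W)"
        then have "g {z,u1} = u2" using eq unfolding f_def by simp
        then show ?thesis using gp[OF c1] u2 NFW by auto
      next
        assume c1: "{z,u1} \<notin> \<sigma> ` (V - W)" and c2: "{z,u2} \<in> \<sigma> ` (V - W)"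
        then have "g {z,u2} = u1" using eq unfolding f_def by simp
        then show ?thesis using gp[OF c2] u1 NFW by auto
      next
        assume c1: "{z,u1} \<notin> \<sigma> ` (V - W)" and c2: "{z,u2} \<notin> \<sigma> ` (V - W)"
        then show ?thesis using eq unfolding f_def by simp
      qed
    qed
    moreover have "f ` nb F z \<subseteq> nb E z"
    proof
      fix w assume "w \<in> f ` nb F z"
      then obtain u where u: "u \<in> nb F z" "w = f u" by auto
      show "w \<in> nb E z"
      proof (cases "{z,u} \<in> \<sigma> ` (V - W)")
        case True
        then have "w = g {z,u}" using u unfolding f_def by simp
        then have "w \<in> V - W" "z \<in> \<sigma> w" using gp[OF True] by auto
        then have "{w, z} \<in> E" unfolding Edef by blast
        then show ?thesis unfolding nb_def by simp
      next
        case False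
        then have "w = u" using u unfolding f_def by simp
        moreover have "{u,z} \<in> F" using u unfolding nb_def by simp
        moreover have "{u,z} \<notin> \<sigma> ` (V - W)" using False by (simp add: insert_commute)
        ultimately show ?thesis unfolding nb_def Edef by blast
      qed
    qed
    ultimately have "card (nb F z) \<le> card (nb E z)"
      using card_inj_on_le[OF _ _ finNE] by blast
    then show ?thesis using deg3F[OF tc z] by simp
  qed
  have "u \<in> W \<or> v \<in> W"
  proof -
    from uv consider (a) "{u,v} \<in> F" | (b) x y where "{u,v} = {x,y}" "x \<in> V - W" "y \<in> \<sigma> x"
      unfolding Edef by blast
    then show ?thesis
    proof cases
      case a then show ?thesis using FW by auto
    next
      case b
      then have "y \<in> W" using FW sF by blast
      then show ?thesis using b(1) by (auto simp: doubleton_eq_iff)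
    qed
  qed
  then show False using degE cu cv by fastforce
qed


locale fanctx =
  fixes V :: "'a set" and E :: "'a set set" and VJ :: "'a set" and EJ :: "'a set set"
    and cyc :: "'a list" and a b d :: 'a
  assumes i3: "internally_3_connected V E" and fo: "fan_of V E VJ EJ cyc a b d"
    and len: "2 \<le> fan_length EJ cyc"
begin

abbreviation "cn \<equiv> nb (cyc_edges cyc)"
abbreviation "N \<equiv> nb E"
abbreviation "I \<equiv> VJ - {a, b, d}"

lemma sgE: "simple_graph V E" using i3 unfolding internally_3_connected_def by auto

lemma isfan: "is_fan VJ EJ cyc a b d" using fo unfolding fan_of_def by auto

lemma hc: "hamiltonian_cycle VJ EJ cyc" and sgJ: "simple_graph VJ EJ"
  using isfan unfolding is_fan_def type_I_def by auto

lemma dist: "distinct cyc" and setc: "set cyc = VJ" and lenc: "3 \<le> length cyc"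
  and cycE: "cyc_edges cyc \<subseteq> EJ"
  using hc unfolding hamiltonian_cycle_def by auto

lemma H: "\<exists>VH EH. simple_graph VH EH \<and> VH \<union> VJ = V \<and> EH \<union> EJ = E \<and> VH \<inter> VJ = {a, b, d}"
  using fo unfolding fan_of_def by auto

lemma VJV: "VJ \<subseteq> V" and EJE: "EJ \<subseteq> E" using H by auto

lemma cycEE: "cyc_edges cyc \<subseteq> E" using cycE EJE by auto

lemma finN: "finite (N v)"
proof -
  have "N v \<subseteq> V" using sgE unfolding nb_def simple_graph_def by (auto simp: doubleton_eq_iff) 
  moreover have "finite V" using sgE unfolding simple_graph_def by auto
  ultimately show ?thesis using finite_subset by blast
qed

lemma cn_card2: "v \<in> VJ \<Longrightarrow> card (cn v) = 2"
  using cn_card[OF dist lenc] setc by auto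

lemma cn_sub: "cn v \<subseteq> VJ"
proof
  fix u assume "u \<in> cn v"
  then obtain j where j: "j < length cyc" "{u,v} = {cyc!j, cyc!(Suc j mod length cyc)}"
    unfolding nb_def cyc_edges_def by auto
  have "Suc j mod length cyc < length cyc" using j by (metis mod_less_divisor not_less0 gr0I)
  then have "cyc!j \<in> set cyc" "cyc!(Suc j mod length cyc) \<in> set cyc" using j by auto
  then show "u \<in> VJ" using j(2) setc by (auto simp: doubleton_eq_iff)
qed

lemma cn_sym: "u \<in> cn v \<longleftrightarrow> v \<in> cn u"
  unfolding nb_def by (simp add: insert_commute)

lemma cn_irr: "v \<notin> cn v"
proof
  assume "v \<in> cn v"
  then have "{v} \<in> EJ" using cycE unfolding nb_def by auto
  then obtain p q where "{v} = {p,q}" "p \<noteq> q" using sgJ unfolding simple_graph_def by blast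
  then have "p \<in> {v}" "q \<in> {v}" by auto
  then show False using \<open>p \<noteq> q\<close> by auto
qed

lemma cnN: "cn v \<subseteq> N v" using cycEE unfolding nb_def by auto

lemma ab: "a \<noteq> b" and ad: "a \<noteq> d" and bd: "b \<noteq> d"
  and abE: "{a,b} \<in> cyc_edges cyc" and adE: "{a,d} \<in> cyc_edges cyc"
  and chA: "\<forall>e\<in>chords EJ cyc. a \<in> e"
  using isfan cn_irr unfolding is_fan_def nb_def by auto

lemma acnb: "a \<in> cn b" and bcna: "b \<in> cn a" and dcna: "d \<in> cn a"
  using abE adE unfolding nb_def by (auto simp: insert_commute)

lemma aVJ: "a \<in> VJ" and bVJ: "b \<in> VJ" and dVJ: "d \<in> VJ"
  using acnb bcna dcna cn_sub by auto

lemma cn_a: "cn a = {b, d}"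
proof (rule two_elem)
  show "card (cn a) = 2" using cn_card2 aVJ by auto
  show "b \<in> cn a" "d \<in> cn a" using abE adE unfolding nb_def by (auto simp: insert_commute)
qed (rule bd)

lemma a_notin_cn: "y \<in> I \<Longrightarrow> a \<notin> cn y"
  using cn_a cn_sym[of a y] by auto

lemma N_int: assumes y: "y \<in> I" shows "N y \<subseteq> insert a (cn y)"
proof
  fix u assume u: "u \<in> N y"
  obtain VH EH where h: "simple_graph VH EH" "VH \<union> VJ = V" "EH \<union> EJ = E" "VH \<inter> VJ = {a, b, d}"
    using H by auto
  have "{u,y} \<notin> EH"
  proof
    assume "{u,y} \<in> EH"
    then have "y \<in> VH" using h(1) unfolding simple_graph_def by (auto simp: doubleton_eq_iff)
    then show False using y h(4) by auto
  qed
  then have ej: "{u,y} \<in> EJ" using u h(3) unfolding nb_def by auto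
  show "u \<in> insert a (cn y)"
  proof (cases "{u,y} \<in> cyc_edges cyc")
    case True then show ?thesis unfolding nb_def by auto
  next
    case False
    then have "{u,y} \<in> chords EJ cyc" using ej unfolding chords_def by auto
    then have "a \<in> {u,y}" using chA by auto
    then show ?thesis using y by auto
  qed
qed

lemma N_adj: assumes "y \<in> I" "{a,y} \<in> E" shows "N y = insert a (cn y)" "card (N y) = 3"
proof -
  show e: "N y = insert a (cn y)" using N_int[OF assms(1)] cnN assms(2) unfolding nb_def by auto
  have "finite (cn y)" using cn_card2[of y] assms(1) by (metis DiffD1 card.infinite zero_neq_numeral)
  then show "card (N y) = 3" using e a_notin_cn[OF assms(1)] cn_card2[of y] assms(1) by simp
qed

lemma N_nadj: assumes "y \<in> I" "{a,y} \<notin> E" shows "N y = cn y" "card (N y) = 2"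
proof -
  show e: "N y = cn y" using N_int[OF assms(1)] cnN assms(2) unfolding nb_def by auto
  then show "card (N y) = 2" using cn_card2[of y] assms(1) by simp
qed

lemma N_le3: "y \<in> I \<Longrightarrow> card (N y) \<le> 3"
  using N_adj N_nadj by (cases "{a,y} \<in> E") auto

lemma chords_one: assumes "\<forall>t\<in>I. {a,t} \<in> E \<longrightarrow> t = y0" shows False
proof -
  have "chords EJ cyc \<subseteq> {{a, y0}}"
  proof
    fix e assume e: "e \<in> chords EJ cyc"
    then have eJ: "e \<in> EJ" and nc: "e \<notin> cyc_edges cyc" unfolding chords_def by auto
    have ae: "a \<in> e" using chA e by auto
    obtain p q where pq: "e = {p,q}" "p \<noteq> q" "p \<in> VJ" "q \<in> VJ" using sgJ eJ unfolding simple_graph_def by blast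
    obtain t where t: "e = {a,t}" "t \<noteq> a" "t \<in> VJ" using pq ae by auto
    have "t \<noteq> b" "t \<noteq> d" using t nc abE adE by auto
    then have "t \<in> I" using t by auto
    moreover have "{a,t} \<in> E" using eJ t EJE by auto
    ultimately have "t = y0" using assms by auto
    then show "e \<in> {{a,y0}}" using t by auto
  qed
  then have "card (chords EJ cyc) \<le> card {{a, y0}}" by (intro card_mono) auto
  then have "card (chords EJ cyc) \<le> 1" by simp
  then show False using len unfolding fan_length_def by auto
qed

lemma deg_a: "4 \<le> card (N a)"
proof -
  obtain t1 where t1: "t1 \<in> I" "{a,t1} \<in> E" using chords_one[of undefined] by auto
  obtain t2 where t2: "t2 \<in> I" "{a,t2} \<in> E" "t2 \<noteq> t1" using chords_one[of t1] by auto
  have s: "{b,d,t1,t2} \<subseteq> N a" using t1 t2 abE adE cycEE unfolding nb_def by (auto simp: insert_commute)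
  have "card {b,d,t1,t2} = 4" using t1 t2 bd by auto
  then show ?thesis using card_mono[OF finN s] by simp
qed

lemma close: assumes "S \<subseteq> VJ" "a \<in> S" "\<forall>v\<in>S. cn v \<subseteq> S" shows "VJ \<subseteq> S"
proof -
  have "set cyc \<subseteq> S" by (rule cn_closure[OF dist lenc assms(2)]) (use aVJ setc assms(3) in auto)
  then show ?thesis using setc by simp
qed

lemma close4: assumes y: "y \<in> I" and cy: "cn y = {b, d}" shows False
proof -
  have "cn b = {a, y}"
    by (rule two_elem) (use cn_card2 bVJ acnb cy cn_sym[of b y] y in auto)
  moreover have "cn d = {a, y}"
    by (rule two_elem) (use cn_card2 dVJ dcna cn_sym[of d a] cy cn_sym[of d y] y in auto)
  ultimately have "VJ \<subseteq> {a,b,y,d}"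
    apply (intro close)
    using cn_a cy y aVJ bVJ dVJ by auto
  then show False using chords_one[of y] by auto
qed

lemma close5: assumes y: "y \<in> I" and w: "w \<in> I" and cy: "cn y = {b, w}" and cw: "cn w = {y, d}"
  and na: "{a,y} \<notin> E \<or> {a,w} \<notin> E" shows False
proof -
  have "cn b = {a, y}"
    by (rule two_elem) (use cn_card2 bVJ acnb cy cn_sym[of b y] y in auto)
  moreover have "cn d = {a, w}"
    by (rule two_elem) (use cn_card2 dVJ dcna cn_sym[of d a] cw cn_sym[of d w] w in auto)
  ultimately have "VJ \<subseteq> {a,b,y,w,d}"
    apply (intro close)
    using cn_a cy cw y w aVJ bVJ dVJ by auto
  then have "I \<subseteq> {y, w}" by auto
  then show False using chords_one[of y] chords_one[of w] na by auto
qed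

end



lemma (in fanctx) swap: "fanctx V E VJ EJ cyc a d b"
proof
  show "internally_3_connected V E" by (rule i3)
  show "2 \<le> fan_length EJ cyc" by (rule len)
  have "{a,d,b} = {a,b,d}" by auto
  then show "fan_of V E VJ EJ cyc a d b" using fo unfolding fan_of_def is_fan_def by auto
qed

lemma a_notI:
  assumes F1: "fanctx V E V1 E1 cyc1 a1 b1 d1" and F2: "fanctx V E V2 E2 cyc2 a2 b2 d2"
  shows "a2 \<notin> V1 - {a1,b1,d1}"
  using fanctx.N_le3[OF F1, of a2] fanctx.deg_a[OF F2] by auto

lemma adj_iff:
  assumes F1: "fanctx V E V1 E1 cyc1 a1 b1 d1" and F2: "fanctx V E V2 E2 cyc2 a2 b2 d2"
    and y1: "y \<in> V1 - {a1,b1,d1}" and y2: "y \<in> V2 - {a2,b2,d2}"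
  shows "{a1,y} \<in> E \<longleftrightarrow> {a2,y} \<in> E"
  using fanctx.N_adj(2)[OF F1 y1] fanctx.N_nadj(2)[OF F1 y1] fanctx.N_adj(2)[OF F2 y2] fanctx.N_nadj(2)[OF F2 y2]
  by (cases "{a1,y} \<in> E"; cases "{a2,y} \<in> E") auto

lemma three_in_two:
  assumes "card A = 2" "p \<in> A" "q \<in> A" "r \<in> A" "p \<noteq> q" "p \<noteq> r" "q \<noteq> r" shows False
proof -
  have "finite A" using assms(1) by (metis card.infinite zero_neq_numeral)
  then have "card {p,q,r} \<le> card A" using assms by (intro card_mono) auto
  then show False using assms by auto
qed

lemma lemA':
  assumes F1: "fanctx V E V1 E1 cyc1 a1 b1 d1" and F2: "fanctx V E V2 E2 cyc2 a2 b2 d2"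
    and ne: "a1 \<noteq> a2" and h1: "a2 = b1" and h2: "a1 = b2"
    and y1: "y \<in> V1 - {a1,b1,d1}" and y2: "y \<in> V2 - {a2,b2,d2}" and ad1: "{a1,y} \<in> E"
  shows False
proof -
  interpret F1: fanctx V E V1 E1 cyc1 a1 b1 d1 by fact
  interpret F2: fanctx V E V2 E2 cyc2 a2 b2 d2 by fact
  let ?c1 = "nb (cyc_edges cyc1)" and ?c2 = "nb (cyc_edges cyc2)" and ?N = "nb E"
  have ad2: "{a2,y} \<in> E" using adj_iff[OF F1 F2 y1 y2] ad1 by simp
  have Ny1: "?N y = insert a1 (?c1 y)" by (rule F1.N_adj(1)[OF y1 ad1])
  have Ny2: "?N y = insert a2 (?c2 y)" by (rule F2.N_adj(1)[OF y2 ad2])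
  have a2N: "a2 \<in> ?N y" using ad2 unfolding nb_def by simp
  have a1N: "a1 \<in> ?N y" using ad1 unfolding nb_def by simp
  have a2c1: "a2 \<in> ?c1 y" using a2N Ny1 ne by auto
  obtain w where wa2: "w \<noteq> a2" and c1y: "?c1 y = {a2, w}"
    using two_elem_ex[OF F1.cn_card2[of y] a2c1] y1 by auto
  have wa1: "w \<noteq> a1" using F1.a_notin_cn[OF y1] c1y by auto
  have a1c2: "a1 \<in> ?c2 y" using a1N Ny2 ne by auto
  have wc2: "w \<in> ?c2 y" using c1y Ny1 Ny2 wa2 by auto
  have c2y: "?c2 y = {a1, w}" using two_elem[OF F2.cn_card2[of y] a1c2 wc2] y2 wa1 by auto
  have wV1: "w \<in> V1" using F1.cn_sub c1y by auto
  have wV2: "w \<in> V2" using F2.cn_sub c2y by auto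
  have wI1: "w \<in> V1 - {a1,b1,d1}"
  proof (rule ccontr)
    assume "w \<notin> V1 - {a1,b1,d1}"
    then have "w = d1" using wV1 wa1 wa2 h1 by auto
    then show False using F1.close4[OF y1] c1y h1 by auto
  qed
  have wI2: "w \<in> V2 - {a2,b2,d2}"
  proof (rule ccontr)
    assume "w \<notin> V2 - {a2,b2,d2}"
    then have "w = d2" using wV2 wa1 wa2 h2 by auto
    then show False using F2.close4[OF y2] c2y h2 by auto
  qed
  have yw: "y \<noteq> w" using F1.cn_irr[of y] c1y by auto
  have a1y: "a1 \<noteq> y" using y1 by auto
  have a1c1b1: "a1 \<in> ?c1 b1" by (rule F1.acnb)
  have yc1b1: "y \<in> ?c1 b1" using F1.cn_sym[of y b1] c1y h1 by auto
  have cb1: "card (?c1 b1) = 2" using F1.cn_card2 F1.bVJ by auto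
  have nw1: "{a1,w} \<notin> E"
  proof
    assume aw1: "{a1,w} \<in> E"
    then have aw2: "{a2,w} \<in> E" using adj_iff[OF F1 F2 wI1 wI2] by simp
    have "a2 \<in> ?N w" using aw2 unfolding nb_def by simp
    then have "a2 \<in> ?c1 w" using F1.N_adj(1)[OF wI1 aw1] ne by auto
    then have "w \<in> ?c1 b1" using F1.cn_sym[of a2 w] h1 by auto
    then show False using three_in_two[OF cb1 a1c1b1 yc1b1] a1y wa1 yw by auto
  qed
  have nw2: "{a2,w} \<notin> E" using adj_iff[OF F1 F2 wI1 wI2] nw1 by simp
  have Nw1: "?N w = ?c1 w" using F1.N_nadj(1)[OF wI1 nw1] .
  have Nw2: "?N w = ?c2 w" using F2.N_nadj(1)[OF wI2 nw2] .
  have cNw: "card (?N w) = 2" using F1.N_nadj(2)[OF wI1 nw1] .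
  have yc1w: "y \<in> ?c1 w" using F1.cn_sym[of y w] c1y by auto
  obtain z where zy: "z \<noteq> y" and c1w: "?c1 w = {y, z}"
    using two_elem_ex[OF F1.cn_card2[of w] yc1w] wV1 by auto
  have zw: "{z,w} \<in> E" using c1w Nw1 unfolding nb_def by auto
  have zdeg: "\<not> card (?N z) \<le> 2" using no_adj_deg2[OF F1.i3 zw] cNw by auto
  have za1: "z \<noteq> a1" using zw nw1 by auto
  have za2: "z \<noteq> a2" using zw nw2 by auto
  have zV1: "z \<in> V1" using F1.cn_sub c1w by auto
  have c2w: "?c2 w = {y, z}" using Nw1 Nw2 c1w by simp
  have zV2: "z \<in> V2" using F2.cn_sub c2w by auto
  show False
  proof (cases "z \<in> V1 - {a1,b1,d1} \<and> z \<in> V2 - {a2,b2,d2}")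
    case True
    then have zI1: "z \<in> V1 - {a1,b1,d1}" and zI2: "z \<in> V2 - {a2,b2,d2}" by auto
    have az1: "{a1,z} \<in> E"
    proof (rule ccontr)
      assume "{a1,z} \<notin> E"
      then show False using F1.N_nadj(2)[OF zI1] zdeg by simp
    qed
    then have az2: "{a2,z} \<in> E" using adj_iff[OF F1 F2 zI1 zI2] by simp
    have "a2 \<in> ?N z" using az2 unfolding nb_def by simp
    then have "a2 \<in> ?c1 z" using F1.N_adj(1)[OF zI1 az1] ne by auto
    then have "z \<in> ?c1 b1" using F1.cn_sym[of a2 z] h1 by auto
    then show False using three_in_two[OF cb1 a1c1b1 yc1b1] a1y za1 zy by auto
  next
    case False
    then consider "z \<notin> V1 - {a1,b1,d1}" | "z \<notin> V2 - {a2,b2,d2}" by blast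
    then show False
    proof cases
      assume "z \<notin> V1 - {a1,b1,d1}"
      then have "z = d1" using zV1 za1 za2 h1 by auto
      then show False using F1.close5[OF y1 wI1] c1y c1w h1 nw1 by auto
    next
      assume "z \<notin> V2 - {a2,b2,d2}"
      then have "z = d2" using zV2 za1 za2 h2 by auto
      then show False using F2.close5[OF y2 wI2] c2y c2w h2 nw2 by auto
    qed
  qed
qed


lemma lemA:
  assumes F1: "fanctx V E V1 E1 cyc1 a1 b1 d1" and F2: "fanctx V E V2 E2 cyc2 a2 b2 d2"
    and ne: "a1 \<noteq> a2"
    and y1: "y \<in> V1 - {a1,b1,d1}" and y2: "y \<in> V2 - {a2,b2,d2}" and ad1: "{a1,y} \<in> E"
  shows False
proof -
  interpret F1: fanctx V E V1 E1 cyc1 a1 b1 d1 by fact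
  interpret F2: fanctx V E V2 E2 cyc2 a2 b2 d2 by fact
  let ?c1 = "nb (cyc_edges cyc1)" and ?c2 = "nb (cyc_edges cyc2)" and ?N = "nb E"
  have ad2: "{a2,y} \<in> E" using adj_iff[OF F1 F2 y1 y2] ad1 by simp
  have a2N: "a2 \<in> ?N y" using ad2 unfolding nb_def by simp
  have a1N: "a1 \<in> ?N y" using ad1 unfolding nb_def by simp
  have "a2 \<in> ?c1 y" using a2N F1.N_adj(1)[OF y1 ad1] ne by auto
  then have "a2 \<in> V1" using F1.cn_sub by auto
  then have h1: "a2 = b1 \<or> a2 = d1" using a_notI[OF F1 F2] ne by auto
  have "a1 \<in> ?c2 y" using a1N F2.N_adj(1)[OF y2 ad2] ne by auto
  then have "a1 \<in> V2" using F2.cn_sub by auto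
  then have h2: "a1 = b2 \<or> a1 = d2" using a_notI[OF F2 F1] ne by auto
  have S1: "fanctx V E V1 E1 cyc1 a1 d1 b1" by (rule F1.swap)
  have S2: "fanctx V E V2 E2 cyc2 a2 d2 b2" by (rule F2.swap)
  have y1': "y \<in> V1 - {a1,d1,b1}" and y2': "y \<in> V2 - {a2,d2,b2}" using y1 y2 by auto
  from h1 h2 show False
  proof (elim disjE)
    assume "a2 = b1" "a1 = b2" then show False using lemA'[OF F1 F2 ne _ _ y1 y2 ad1] by auto
  next
    assume "a2 = b1" "a1 = d2" then show False using lemA'[OF F1 S2 ne _ _ y1 y2' ad1] by auto
  next
    assume "a2 = d1" "a1 = b2" then show False using lemA'[OF S1 F2 ne _ _ y1' y2 ad1] by auto
  next
    assume "a2 = d1" "a1 = d2" then show False using lemA'[OF S1 S2 ne _ _ y1' y2' ad1] by auto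
  qed
qed

lemma lemM':
  assumes F1: "fanctx V E V1 E1 cyc1 a1 b1 d1" and F2: "fanctx V E V2 E2 cyc2 a2 b2 d2"
    and ne: "a1 \<noteq> a2" and x1: "x \<in> V1 - {a1,b1,d1}" and nx: "{a1,x} \<notin> E"
    and c1x: "nb (cyc_edges cyc1) x = {b1, w}" and w1: "w \<in> V1 - {a1,b1,d1}"
    and w2: "w \<in> {b2, d2}" and wdeg: "\<not> card (nb E w) \<le> 2" and a2b1: "a2 \<noteq> b1"
  shows False
proof -
  interpret F1: fanctx V E V1 E1 cyc1 a1 b1 d1 by fact
  interpret F2: fanctx V E V2 E2 cyc2 a2 b2 d2 by fact
  let ?c1 = "nb (cyc_edges cyc1)" and ?c2 = "nb (cyc_edges cyc2)" and ?N = "nb E"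
  have aw1: "{a1,w} \<in> E"
  proof (rule ccontr)
    assume "{a1,w} \<notin> E"
    then show False using F1.N_nadj(2)[OF w1] wdeg by simp
  qed
  have "w \<in> ?c2 a2" using w2 F2.cn_a by auto
  then have "{w,a2} \<in> E" using F2.cycEE unfolding nb_def by auto
  then have "a2 \<in> ?N w" unfolding nb_def by (simp add: insert_commute)
  then have a2c: "a2 \<in> ?c1 w" using F1.N_adj(1)[OF w1 aw1] ne by auto
  then have "a2 \<in> V1" using F1.cn_sub by auto
  then have a2d1: "a2 = d1" using a_notI[OF F1 F2] ne a2b1 by auto
  have xc: "x \<in> ?c1 w" using F1.cn_sym[of x w] c1x by auto
  have c1w: "?c1 w = {x, d1}" using two_elem[OF F1.cn_card2[of w] xc] a2c a2d1 x1 w1 by auto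
  show False using F1.close5[OF x1 w1 c1x c1w] nx by auto
qed

lemma lemM:
  assumes F1: "fanctx V E V1 E1 cyc1 a1 b1 d1" and F2: "fanctx V E V2 E2 cyc2 a2 b2 d2"
    and ne: "a1 \<noteq> a2" and x1: "x \<in> V1 - {a1,b1,d1}" and nx: "{a1,x} \<notin> E"
    and c1x: "nb (cyc_edges cyc1) x = {p, q}"
    and p2: "p \<in> V2 - {a2,b2,d2}" and p1: "p \<notin> V1 - {a1,b1,d1}" and pa1: "p \<noteq> a1"
    and q1: "q \<in> V1 - {a1,b1,d1}" and q2: "q \<notin> V2 - {a2,b2,d2}" and qV2: "q \<in> V2"
    and qdeg: "\<not> card (nb E q) \<le> 2"
  shows False
proof -
  interpret F1: fanctx V E V1 E1 cyc1 a1 b1 d1 by fact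
  have pV1: "p \<in> V1" using F1.cn_sub c1x by auto
  have qa2: "q \<noteq> a2" using a_notI[OF F1 F2] q1 by auto
  have qw: "q \<in> {b2, d2}" using q2 qV2 qa2 by auto
  have a2p: "a2 \<noteq> p" using p2 by auto
  have "p = b1 \<or> p = d1" using pV1 p1 pa1 by auto
  then show False
  proof
    assume "p = b1"
    then show False using lemM'[OF F1 F2 ne x1 nx _ q1 qw qdeg] c1x a2p by auto
  next
    assume "p = d1"
    moreover have "x \<in> V1 - {a1,d1,b1}" "q \<in> V1 - {a1,d1,b1}" using x1 q1 by auto
    ultimately show False using lemM'[OF F1.swap F2 ne _ nx _ _ qw qdeg] c1x a2p by auto
  qed
qed

theorem mainTheorem15:
  fixes V :: "'a set" and E :: "'a set set"
    and V1 V2 :: "'a set" and E1 E2 :: "'a set set" and cyc1 cyc2 :: "'a list"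
    and a1 b1 d1 a2 b2 d2 x :: 'a
  assumes "internally_3_connected V E"
    and "fan_of V E V1 E1 cyc1 a1 b1 d1" and "fan_length E1 cyc1 \<ge> 2"
    and "fan_of V E V2 E2 cyc2 a2 b2 d2" and "fan_length E2 cyc2 \<ge> 2"
    and "x \<in> V1 - {a1, b1, d1}" and "x \<in> V2 - {a2, b2, d2}"
  shows "a1 = a2"
proof (rule ccontr)
  assume ne: "a1 \<noteq> a2"
  have F1: "fanctx V E V1 E1 cyc1 a1 b1 d1" using assms by unfold_locales auto
  have F2: "fanctx V E V2 E2 cyc2 a2 b2 d2" using assms by unfold_locales auto
  interpret F1: fanctx V E V1 E1 cyc1 a1 b1 d1 by fact
  interpret F2: fanctx V E V2 E2 cyc2 a2 b2 d2 by fact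
  let ?c1 = "nb (cyc_edges cyc1)" and ?c2 = "nb (cyc_edges cyc2)" and ?N = "nb E"
  have x1: "x \<in> V1 - {a1, b1, d1}" and x2: "x \<in> V2 - {a2, b2, d2}" using assms by auto
  show False
  proof (cases "{a1,x} \<in> E")
    case True then show False using lemA[OF F1 F2 ne x1 x2] by auto
  next
    case nx1: False
    have nx2: "{a2,x} \<notin> E" using adj_iff[OF F1 F2 x1 x2] nx1 by simp
    have Nx1: "?N x = ?c1 x" using F1.N_nadj(1)[OF x1 nx1] .
    have Nx2: "?N x = ?c2 x" using F2.N_nadj(1)[OF x2 nx2] .
    have cNx: "card (?N x) = 2" using F1.N_nadj(2)[OF x1 nx1] .
    obtain u w where uw: "u \<noteq> w" and c1x: "?c1 x = {u, w}"
      using F1.cn_card2[of x] x1 by (meson DiffD1 card_2_iff)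
    have c2x: "?c2 x = {u, w}" using c1x Nx1 Nx2 by simp
    have ue: "{u,x} \<in> E" and we: "{w,x} \<in> E" using c1x Nx1 unfolding nb_def by auto
    have udeg: "\<not> card (?N u) \<le> 2" using no_adj_deg2[OF F1.i3 ue] cNx by auto
    have wdeg: "\<not> card (?N w) \<le> 2" using no_adj_deg2[OF F1.i3 we] cNx by auto
    have both: False if z1: "z \<in> V1 - {a1,b1,d1}" and z2: "z \<in> V2 - {a2,b2,d2}"
      and zd: "\<not> card (?N z) \<le> 2" for z
    proof -
      have "{a1,z} \<in> E"
      proof (rule ccontr)
        assume "{a1,z} \<notin> E"
        then show False using F1.N_nadj(2)[OF z1] zd by simp
      qed
      then show False using lemA[OF F1 F2 ne z1 z2] by auto
    qed
    have ua1: "u \<noteq> a1" and wa1: "w \<noteq> a1" using ue we nx1 by auto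
    have ua2: "u \<noteq> a2" and wa2: "w \<noteq> a2" using ue we nx2 by auto
    have uV1: "u \<in> V1" and wV1: "w \<in> V1" using F1.cn_sub c1x by auto
    have uV2: "u \<in> V2" and wV2: "w \<in> V2" using F2.cn_sub c2x by auto
    have c1: "u \<in> V1 - {a1,b1,d1} \<or> w \<in> V1 - {a1,b1,d1}"
    proof (rule ccontr)
      assume "\<not> ?thesis"
      then have "{u,w} = {b1,d1}" using uV1 wV1 ua1 wa1 uw by auto
      then show False using F1.close4[OF x1] c1x by auto
    qed
    have c2: "u \<in> V2 - {a2,b2,d2} \<or> w \<in> V2 - {a2,b2,d2}"
    proof (rule ccontr)
      assume "\<not> ?thesis"
      then have "{u,w} = {b2,d2}" using uV2 wV2 ua2 wa2 uw by auto
      then show False using F2.close4[OF x2] c2x by auto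
    qed
    have nu: "\<not> (u \<in> V1 - {a1,b1,d1} \<and> u \<in> V2 - {a2,b2,d2})" using both udeg by blast
    have nw: "\<not> (w \<in> V1 - {a1,b1,d1} \<and> w \<in> V2 - {a2,b2,d2})" using both wdeg by blast
    from c1 c2 nu nw consider
      "u \<in> V2 - {a2,b2,d2}" "u \<notin> V1 - {a1,b1,d1}" "w \<in> V1 - {a1,b1,d1}" "w \<notin> V2 - {a2,b2,d2}"
      | "w \<in> V2 - {a2,b2,d2}" "w \<notin> V1 - {a1,b1,d1}" "u \<in> V1 - {a1,b1,d1}" "u \<notin> V2 - {a2,b2,d2}"
      by blast
    then show False
    proof cases
      case 1 then show False using lemM[OF F1 F2 ne x1 nx1 c1x _ _ ua1 _ _ wV2 wdeg] by auto
    next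
      case 2
      have "?c1 x = {w, u}" using c1x by auto
      then show False using lemM[OF F1 F2 ne x1 nx1 _ _ _ wa1 _ _ uV2 udeg] 2 by auto
    qed
  qed
qed

end
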